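(* In the group-based tree model described in the context (with arbitrary real edge parameters), let $e$ be a pendant edge of $\mathscr{T}$ with leaf $i$ and internal endpoint $\nu$. Let $j,k$ be leaves distinct from $i$ such that the path between $j$ and $k$ passes through $\nu$. For $a,b,c\in G$ let $w(a,b,c)\in G^m$ assign $a$ to leaf $i$, $b$ to leaf $j$, $c$ to leaf $k$ and $0$ to all other leaves. Then for every $h\in G$, $q_{w(0,-h,h)}\neq 0$ and $$\big[\check f^{(e)}(h)\big]^2=\frac{q_{w(h,-h,0)}\;q_{w(-h,0,h)}}{q_{w(0,-h,h)}}.$$
   Context: Group-based model on a tree. $G$ is a finite abelian group written additively with identity $0$; fix $G\cong\prod_k\mathbb{Z}_{n_k}$ and for $g,h\in G$ put $\hat g(h)=\prod_k\exp(2\pi i\,g_kh_k/n_k)$. The Fourier transform of $a:G\to\mathbb{C}$ is $\check a(g)=\sum_{h\in G}\hat g(h)a(h)$. $\mathscr{T}$ is a finite tree with $m$ leaves, one of which is designated the root leaf $r$. Each edge $e$ carries a function $\psi^{(e)}:G\to\mathbb{R}$ with $\sum_g\psi^{(e)}(g)=0$ and $\psi^{(e)}(g)=\psi^{(e)}(-g)$ (its values at $g\ne0$ are the edge parameters of $e$); put $Q^{(e)}_{g,h}=\psi^{(e)}(h-g)$, $P^{(e)}=\exp(Q^{(e)})$, $f^{(e)}(h)=P^{(e)}_{0,h}$, so $P^{(e)}_{g,h}=f^{(e)}(h-g)$. Edges are directed away from $r$. For $\mathbf g\in G^{m}$ (indexed by all leaves, $r$ included), $p_{\mathbf g}=\sum_\sigma\prod_{e=(u\to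 v)}P^{(e)}_{\sigma(u),\sigma(v)}$, the sum over all maps $\sigma$ from vertices to $G$ with $\sigma(r)=0$ and $\sigma$ equal to $\mathbf g$ on the leaves. The Fourier transform is $q_{\mathbf g}=\sum_{\mathbf h\in G^m}\prod_{x}\hat g_x(h_x)\,p_{\mathbf h}$. For an edge $e$, $\Lambda(e)$ is the set of leaves whose path to $r$ contains $e$, and ${}^*g_e=\sum_{x\in\Lambda(e)}g_x$. It is a known fact (Hendy; Evans–Speed) that $q_{\mathbf g}=\prod_{e}\check f^{(e)}({}^*g_e)$ for all $\mathbf g\in G^m$. *)

theory Defs
  imports "HOL-Analysis.Analysis"
begin

section \<open>The group G = Z_{n_1} x ... x Z_{n_K}, elements as int lists\<close>

definition Gset :: "nat list \<Rightarrow> int list set" where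
  "Gset ns = {g. length g = length ns \<and> (\<forall>k<length ns. 0 \<le> g!k \<and> g!k < int (ns!k))}"

definition gzero :: "nat list \<Rightarrow> int list" where
  "gzero ns = replicate (length ns) 0"

definition gadd :: "nat list \<Rightarrow> int list \<Rightarrow> int list \<Rightarrow> int list" where
  "gadd ns g h = map (\<lambda>k. (g!k + h!k) mod int (ns!k)) [0..<length ns]"

definition gneg :: "nat list \<Rightarrow> int list \<Rightarrow> int list" where
  "gneg ns g = map (\<lambda>k. (- (g!k)) mod int (ns!k)) [0..<length ns]"

definition gsub :: "nat list \<Rightarrow> int list \<Rightarrow> int list \<Rightarrow> int list" where
  "gsub ns h g = gadd ns h (gneg ns g)"

definition gchar :: "nat list \<Rightarrow> int list \<Rightarrow> int list \<Rightarrow> complex" where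
  "gchar ns g h = (\<Prod>k<length ns.
      exp (2 * complex_of_real pi * \<i> * of_int (g!k * h!k) / of_nat (ns!k)))"

definition fourier :: "nat list \<Rightarrow> (int list \<Rightarrow> complex) \<Rightarrow> int list \<Rightarrow> complex" where
  "fourier ns a g = (\<Sum>h\<in>Gset ns. gchar ns g h * a h)"

fun matpow :: "'a set \<Rightarrow> ('a \<Rightarrow> 'a \<Rightarrow> real) \<Rightarrow> nat \<Rightarrow> 'a \<Rightarrow> 'a \<Rightarrow> real" where
  "matpow A Q 0 a b = (if a = b then 1 else 0)"
| "matpow A Q (Suc n) a b = (\<Sum>x\<in>A. matpow A Q n a x * Q x b)"

definition mexp :: "'a set \<Rightarrow> ('a \<Rightarrow> 'a \<Rightarrow> real) \<Rightarrow> 'a \<Rightarrow> 'a \<Rightarrow> real" where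
  "mexp A Q a b = (\<Sum>n. matpow A Q n a b / fact n)"

definition edge_param :: "nat list \<Rightarrow> (int list \<Rightarrow> real) \<Rightarrow> bool" where
  "edge_param ns psi \<longleftrightarrow> (\<Sum>g\<in>Gset ns. psi g) = 0 \<and> (\<forall>g\<in>Gset ns. psi g = psi (gneg ns g))"

definition Qmat :: "nat list \<Rightarrow> (int list \<Rightarrow> real) \<Rightarrow> int list \<Rightarrow> int list \<Rightarrow> real" where
  "Qmat ns psi g h = psi (gsub ns h g)"

definition Pmat :: "nat list \<Rightarrow> (int list \<Rightarrow> real) \<Rightarrow> int list \<Rightarrow> int list \<Rightarrow> real" where
  "Pmat ns psi = mexp (Gset ns) (Qmat ns psi)"

definition fedge :: "nat list \<Rightarrow> (int list \<Rightarrow> real) \<Rightarrow> int list \<Rightarrow> real" where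
  "fedge ns psi h = Pmat ns psi (gzero ns) h"

definition fcheck :: "nat list \<Rightarrow> (int list \<Rightarrow> real) \<Rightarrow> int list \<Rightarrow> complex" where
  "fcheck ns psi = fourier ns (\<lambda>x. complex_of_real (fedge ns psi x))"

section \<open>Trees (undirected edges as 2-element vertex sets)\<close>

definition is_path :: "'v set set \<Rightarrow> 'v list \<Rightarrow> 'v \<Rightarrow> 'v \<Rightarrow> bool" where
  "is_path E p a b \<longleftrightarrow> p \<noteq> [] \<and> hd p = a \<and> last p = b \<and> distinct p \<and>
     (\<forall>t. Suc t < length p \<longrightarrow> {p!t, p!Suc t} \<in> E)"

definition is_cycle :: "'v set set \<Rightarrow> 'v list \<Rightarrow> bool" where
  "is_cycle E p \<longleftrightarrow> length p \<ge> 3 \<and> distinct p \<and>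
     (\<forall>t. Suc t < length p \<longrightarrow> {p!t, p!Suc t} \<in> E) \<and> {last p, hd p} \<in> E"

definition is_tree :: "'v set \<Rightarrow> 'v set set \<Rightarrow> bool" where
  "is_tree V E \<longleftrightarrow> finite V \<and> V \<noteq> {} \<and>
     (\<forall>e\<in>E. \<exists>u v. e = {u, v} \<and> u \<noteq> v \<and> u \<in> V \<and> v \<in> V) \<and>
     (\<forall>u\<in>V. \<forall>v\<in>V. \<exists>p. is_path E p u v) \<and>
     (\<nexists>p. is_cycle E p)"

definition leaves :: "'v set \<Rightarrow> 'v set set \<Rightarrow> 'v set" where
  "leaves V E = {v\<in>V. card {e\<in>E. v \<in> e} = 1}"

text \<open>Edges directed away from the root leaf r: (u,v) with u on the path from r to v.\<close>
definition dedges :: "'v set set \<Rightarrow> 'v \<Rightarrow> ('v \<times> 'v) set" where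
  "dedges E r = {(u, v). {u, v} \<in> E \<and> (\<exists>p. is_path E p r v \<and> u \<in> set p)}"

definition pprob :: "nat list \<Rightarrow> 'v set \<Rightarrow> 'v set set \<Rightarrow> 'v \<Rightarrow> ('v set \<Rightarrow> int list \<Rightarrow> real)
     \<Rightarrow> ('v \<Rightarrow> int list) \<Rightarrow> real" where
  "pprob ns V E r psi g =
     (\<Sum>\<sigma>\<in>{\<sigma>\<in>PiE V (\<lambda>_. Gset ns). \<sigma> r = gzero ns \<and> (\<forall>x\<in>leaves V E. \<sigma> x = g x)}.
        \<Prod>(u, v)\<in>dedges E r. Pmat ns (psi {u, v}) (\<sigma> u) (\<sigma> v))"

definition qtrans :: "nat list \<Rightarrow> 'v set \<Rightarrow> 'v set set \<Rightarrow> 'v \<Rightarrow> ('v set \<Rightarrow> int list \<Rightarrow> real)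
     \<Rightarrow> ('v \<Rightarrow> int list) \<Rightarrow> complex" where
  "qtrans ns V E r psi g =
     (\<Sum>h\<in>PiE (leaves V E) (\<lambda>_. Gset ns).
        (\<Prod>x\<in>leaves V E. gchar ns (g x) (h x)) * complex_of_real (pprob ns V E r psi h))"

definition wvec :: "nat list \<Rightarrow> 'v set \<Rightarrow> 'v set set \<Rightarrow> 'v \<Rightarrow> 'v \<Rightarrow> 'v
     \<Rightarrow> int list \<Rightarrow> int list \<Rightarrow> int list \<Rightarrow> 'v \<Rightarrow> int list" where
  "wvec ns V E i j k a b c = restrict
     (\<lambda>x. if x = i then a else if x = j then b else if x = k then c else gzero ns) (leaves V E)"

end

theory Submission
  imports Defs "HOL-Analysis.Analysis"
begin


locale grp = fixes ns :: "nat list" assumes pos: "\<forall>n\<in>set ns. 0 < n"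
begin

abbreviation "G \<equiv> Gset ns"

lemma posk: "k < length ns \<Longrightarrow> 0 < ns!k" using pos by auto

lemma len_gadd[simp]: "length (gadd ns g h) = length ns" by (simp add: gadd_def)
lemma len_gneg[simp]: "length (gneg ns g) = length ns" by (simp add: gneg_def)
lemma len_gsub[simp]: "length (gsub ns g h) = length ns" by (simp add: gsub_def)
lemma len_gzero[simp]: "length (gzero ns) = length ns" by (simp add: gzero_def)
lemma nth_gadd[simp]: "k < length ns \<Longrightarrow> gadd ns g h ! k = (g!k + h!k) mod int (ns!k)"
  by (simp add: gadd_def)
lemma nth_gneg[simp]: "k < length ns \<Longrightarrow> gneg ns g ! k = (- (g!k)) mod int (ns!k)"
  by (simp add: gneg_def)
lemma nth_gsub[simp]: "k < length ns \<Longrightarrow> gsub ns g h ! k = (g!k - h!k) mod int (ns!k)"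
  by (simp add: gsub_def mod_add_right_eq)
lemma nth_gzero[simp]: "k < length ns \<Longrightarrow> gzero ns ! k = 0"
  by (simp add: gzero_def)

lemma memG: "g \<in> G \<longleftrightarrow> length g = length ns \<and> (\<forall>k<length ns. 0 \<le> g!k \<and> g!k < int (ns!k))"
  by (simp add: Gset_def)

lemma gadd_G[simp]: "gadd ns g h \<in> G" using posk by (auto simp: memG)
lemma gneg_G[simp]: "gneg ns g \<in> G" using posk by (auto simp: memG)
lemma gsub_G[simp]: "gsub ns g h \<in> G" using posk by (auto simp: memG)
lemma gzero_G[simp]: "gzero ns \<in> G" using posk by (auto simp: memG)

lemma G_mod: "g \<in> G \<Longrightarrow> k < length ns \<Longrightarrow> g!k mod int (ns!k) = g!k"
  by (auto simp: memG)

lemma G_eqI: "g \<in> G \<Longrightarrow> h \<in> G \<Longrightarrow> (\<And>k. k < length ns \<Longrightarrow> g!k mod int (ns!k) = h!k mod int (ns!k)) \<Longrightarrow> g = h"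
  by (rule nth_equalityI) (auto simp: memG G_mod)

lemma finG[simp]: "finite G"
proof -
  have "G \<subseteq> {g. set g \<subseteq> {0..int (Max (insert 0 (set ns)))} \<and> length g = length ns}"
  proof
    fix g assume g: "g \<in> G"
    { fix x assume "x \<in> set g"
      then obtain k where k: "k < length g" "x = g!k" by (auto simp: in_set_conv_nth)
      with g have "k < length ns" "0 \<le> x" "x < int (ns!k)" by (auto simp: memG)
      moreover have "ns!k \<le> Max (insert 0 (set ns))" using \<open>k < length ns\<close> by (auto intro: Max_ge)
      ultimately have "x \<in> {0..int (Max (insert 0 (set ns)))}" by (simp, linarith) }
    then show "g \<in> {g. set g \<subseteq> {0..int (Max (insert 0 (set ns)))} \<and> length g = length ns}"
      using g by (auto simp: memG)
  qed
  moreover have "finite {g. set g \<subseteq> {0..int (Max (insert 0 (set ns)))} \<and> length g = length ns}"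
    by (rule finite_lists_length_eq) simp
  ultimately show ?thesis by (rule finite_subset)
qed

lemma gsub_gadd_left: "a \<in> G \<Longrightarrow> y \<in> G \<Longrightarrow> gsub ns (gadd ns a y) a = y"
  by (rule G_eqI) (auto simp: mod_simps)
lemma gsub_gadd2: "a \<in> G \<Longrightarrow> y \<in> G \<Longrightarrow> b \<in> G \<Longrightarrow> gsub ns b (gadd ns a y) = gsub ns (gsub ns b a) y"
  by (rule G_eqI) (auto simp: mod_simps algebra_simps)
lemma gadd_gsub: "a \<in> G \<Longrightarrow> b \<in> G \<Longrightarrow> gadd ns a (gsub ns b a) = b"
  by (rule G_eqI) (auto simp: mod_simps algebra_simps)
lemma gsub_eq0: "a \<in> G \<Longrightarrow> b \<in> G \<Longrightarrow> gsub ns b a = gzero ns \<longleftrightarrow> a = b"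
proof
  assume a: "a \<in> G" "b \<in> G" and "gsub ns b a = gzero ns"
  then have "gadd ns a (gsub ns b a) = gadd ns a (gzero ns)" by simp
  then show "a = b" using a gadd_gsub[OF a]
    by (metis G_eqI add.right_neutral gadd_G mod_mod_trivial nth_gadd nth_gzero)
next
  assume a: "a \<in> G" "b \<in> G" "a = b"
  show "gsub ns b a = gzero ns" using a by (intro G_eqI) (auto simp: mod_simps)
qed
lemma gneg_gneg: "a \<in> G \<Longrightarrow> gneg ns (gneg ns a) = a"
  by (rule G_eqI) (auto simp: mod_simps)

lemma bij_gadd: "a \<in> G \<Longrightarrow> bij_betw (gadd ns a) G G"
  by (rule bij_betw_byWitness[where f'="\<lambda>y. gsub ns y a"])
     (auto simp: gsub_gadd_left gadd_gsub)
lemma bij_gneg: "bij_betw (gneg ns) G G"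
  by (rule bij_betw_byWitness[where f'="gneg ns"]) (auto simp: gneg_gneg)

lemma sum_shift: "a \<in> G \<Longrightarrow> (\<Sum>x\<in>G. F x) = (\<Sum>y\<in>G. F (gadd ns a y))"
  using sum.reindex_bij_betw[OF bij_gadd, of a F] by simp
lemma sum_neg: "(\<Sum>x\<in>G. F x) = (\<Sum>y\<in>G. F (gneg ns y))"
  using sum.reindex_bij_betw[OF bij_gneg, of F] by simp

end


definition ce :: "nat \<Rightarrow> int \<Rightarrow> complex" where
  "ce n m = exp (2 * complex_of_real pi * \<i> * of_int m / of_nat n)"

lemma ce_add: "ce n (a + b) = ce n a * ce n b"
  unfolding ce_def by (simp add: exp_add[symmetric] ring_distribs add_divide_distrib)

lemma ce_zero[simp]: "ce n 0 = 1" by (simp add: ce_def)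

lemma ce_multn: "0 < n \<Longrightarrow> ce n (int n * q) = 1"
proof -
  assume n: "0 < n"
  have "2 * complex_of_real pi * \<i> * of_int (int n * q) / of_nat n = (2 * of_int q * pi) * \<i>"
    using n by (simp add: field_simps)
  moreover have "exp ((2 * complex_of_int q * pi) * \<i>) = 1"
    using exp_integer_2pi[of "real_of_int q"] by simp
  ultimately show ?thesis unfolding ce_def by simp
qed

lemma ce_modr: "0 < n \<Longrightarrow> ce n (c * (a mod int n)) = ce n (c * a)"
proof -
  assume n: "0 < n"
  have "c * (a mod int n) = c * a + int n * (- c * (a div int n))"
    by (simp add: algebra_simps minus_div_mult_eq_mod[symmetric])
  then show ?thesis using ce_add[of n "c*a" "int n * (- c * (a div int n))"] ce_multn[OF n, of "- (c * (a div int n))"] by simp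
qed

lemma ce_modl: "0 < n \<Longrightarrow> ce n ((a mod int n) * c) = ce n (a * c)"
  using ce_modr[of n c a] by (simp add: mult.commute)

context grp begin

lemma gchar_ce: "gchar ns g h = (\<Prod>k<length ns. ce (ns!k) (g!k * h!k))"
  by (simp add: gchar_def ce_def)

lemma gchar_add2: "gchar ns c (gadd ns x s) = gchar ns c x * gchar ns c s"
  unfolding gchar_ce prod.distrib[symmetric]
  by (rule prod.cong) (auto simp: ce_modr posk ring_distribs ce_add)

lemma gchar_add1: "gchar ns (gadd ns x s) c = gchar ns x c * gchar ns s c"
  unfolding gchar_ce prod.distrib[symmetric]
  by (rule prod.cong) (auto simp: ce_modl posk ring_distribs ce_add)

lemma gchar_zero1[simp]: "gchar ns (gzero ns) t = 1"
  unfolding gchar_ce by simp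
lemma gchar_zero2[simp]: "gchar ns t (gzero ns) = 1"
  unfolding gchar_ce by simp

lemma gchar_neg_mult: "gchar ns (gneg ns h) t * gchar ns h t = 1"
proof -
  have "gchar ns (gneg ns h) t * gchar ns h t = (\<Prod>k<length ns. ce (ns!k) (- (h!k) * t!k + h!k * t!k))"
    unfolding gchar_ce prod.distrib[symmetric] ce_add
    by (rule prod.cong) (auto simp: ce_modl posk)
  then show ?thesis by simp
qed

lemma gchar_neg_swap: "gchar ns (gneg ns h) t = gchar ns h (gneg ns t)"
  unfolding gchar_ce
  by (rule prod.cong) (auto simp: ce_modl ce_modr posk)

end


context grp begin

definition "psih psi c = (\<Sum>t\<in>G. gchar ns c t * complex_of_real (psi t))"

lemma matpow_bound:
  fixes psi
  defines "B \<equiv> (\<Sum>b\<in>G. \<Sum>x\<in>G. \<bar>Qmat ns psi x b\<bar>)"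
  shows "b \<in> G \<Longrightarrow> \<bar>matpow G (Qmat ns psi) n a b\<bar> \<le> B ^ n"
proof (induction n arbitrary: b)
  case 0 then show ?case by simp
next
  case (Suc n)
  have B0: "0 \<le> B" unfolding B_def by (intro sum_nonneg) auto
  have colb: "(\<Sum>x\<in>G. \<bar>Qmat ns psi x b\<bar>) \<le> B"
    unfolding B_def using Suc.prems
    by (intro member_le_sum[where f="\<lambda>b. \<Sum>x\<in>G. \<bar>Qmat ns psi x b\<bar>"]) (auto intro: sum_nonneg)
  have "\<bar>matpow G (Qmat ns psi) (Suc n) a b\<bar> \<le> (\<Sum>x\<in>G. \<bar>matpow G (Qmat ns psi) n a x\<bar> * \<bar>Qmat ns psi x b\<bar>)"
    by (simp add: abs_mult[symmetric] sum_abs del: abs_mult)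
  also have "\<dots> \<le> (\<Sum>x\<in>G. B ^ n * \<bar>Qmat ns psi x b\<bar>)"
    by (intro sum_mono mult_right_mono Suc.IH) auto
  also have "\<dots> = B^n * (\<Sum>x\<in>G. \<bar>Qmat ns psi x b\<bar>)" by (simp add: sum_distrib_left)
  also have "\<dots> \<le> B^n * B" using colb B0 by (intro mult_left_mono) auto
  finally show ?case by (simp add: mult.commute)
qed

lemma matpow_summable: "b \<in> G \<Longrightarrow> summable (\<lambda>n. matpow G (Qmat ns psi) n a b / fact n)"
proof -
  assume b: "b \<in> G"
  define B where "B = (\<Sum>b\<in>G. \<Sum>x\<in>G. \<bar>Qmat ns psi x b\<bar>)"
  have "summable (\<lambda>n. B^n / fact n)"
    using summable_exp_generic[of B] by (simp add: divide_inverse_commute)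
  moreover have "norm (matpow G (Qmat ns psi) n a b / fact n) \<le> B^n / fact n" for n
    using matpow_bound[OF b, of psi n a] unfolding B_def real_norm_def abs_divide abs_of_pos[OF fact_gt_zero]
    by (rule divide_right_mono) auto
  ultimately show ?thesis by (rule summable_comparison_test'[where N=0])
qed

lemma matpow_circ: "a \<in> G \<Longrightarrow> b \<in> G \<Longrightarrow>
   matpow G (Qmat ns psi) n a b = matpow G (Qmat ns psi) n (gzero ns) (gsub ns b a)"
proof (induction n arbitrary: b)
  case 0 then show ?case using gsub_eq0[of a b] by auto
next
  case (Suc n)
  have "matpow G (Qmat ns psi) (Suc n) a b = (\<Sum>x\<in>G. matpow G (Qmat ns psi) n (gzero ns) (gsub ns x a) * psi (gsub ns b x))"
    unfolding matpow.simps
  proof (rule sum.cong[OF refl])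
    fix x assume "x \<in> G"
    then show "matpow G (Qmat ns psi) n a x * Qmat ns psi x b = matpow G (Qmat ns psi) n (gzero ns) (gsub ns x a) * psi (gsub ns b x)"
      using Suc.IH[of x] Suc.prems unfolding Qmat_def[of ns psi x b] by simp
  qed
  also have "\<dots> = (\<Sum>y\<in>G. matpow G (Qmat ns psi) n (gzero ns) (gsub ns (gadd ns a y) a) * psi (gsub ns b (gadd ns a y)))"
    by (rule sum_shift[OF Suc.prems(1)])
  also have "\<dots> = (\<Sum>y\<in>G. matpow G (Qmat ns psi) n (gzero ns) y * psi (gsub ns (gsub ns b a) y))"
    using Suc.prems by (intro sum.cong) (auto simp: gsub_gadd_left gsub_gadd2)
  also have "\<dots> = matpow G (Qmat ns psi) (Suc n) (gzero ns) (gsub ns b a)"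
    by (simp add: Qmat_def)
  finally show ?case .
qed

lemma Pmat_shift: "a \<in> G \<Longrightarrow> t \<in> G \<Longrightarrow> Pmat ns psi a (gadd ns a t) = fedge ns psi t"
  unfolding fedge_def Pmat_def mexp_def
  by (simp add: matpow_circ[of a] gsub_gadd_left)

lemma matpow_fourier: "(\<Sum>t\<in>G. gchar ns c t * complex_of_real (matpow G (Qmat ns psi) n (gzero ns) t)) = (psih psi c) ^ n"
proof (induction n)
  case 0
  have "(\<Sum>t\<in>G. gchar ns c t * complex_of_real (if gzero ns = t then 1 else 0)) = gchar ns c (gzero ns)"
    by (simp add: if_distrib cong: if_cong)
  then show ?case by simp
next
  case (Suc n)
  let ?M = "\<lambda>x. complex_of_real (matpow G (Qmat ns psi) n (gzero ns) x)"
  have "(\<Sum>t\<in>G. gchar ns c t * complex_of_real (matpow G (Qmat ns psi) (Suc n) (gzero ns) t))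
      = (\<Sum>t\<in>G. \<Sum>x\<in>G. ?M x * (gchar ns c t * complex_of_real (psi (gsub ns t x))))"
    by (simp add: Qmat_def sum_distrib_left algebra_simps)
  also have "\<dots> = (\<Sum>x\<in>G. ?M x * (\<Sum>t\<in>G. gchar ns c t * complex_of_real (psi (gsub ns t x))))"
    by (subst sum.swap) (simp add: sum_distrib_left)
  also have "\<dots> = (\<Sum>x\<in>G. ?M x * (gchar ns c x * psih psi c))"
  proof (rule sum.cong[OF refl])
    fix x assume x: "x \<in> G"
    have "(\<Sum>t\<in>G. gchar ns c t * complex_of_real (psi (gsub ns t x)))
        = (\<Sum>s\<in>G. gchar ns c (gadd ns x s) * complex_of_real (psi (gsub ns (gadd ns x s) x)))"
      by (rule sum_shift[OF x])
    also have "\<dots> = (\<Sum>s\<in>G. gchar ns c x * (gchar ns c s * complex_of_real (psi s)))"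
      using x by (intro sum.cong) (auto simp: gsub_gadd_left gchar_add2)
    also have "\<dots> = gchar ns c x * psih psi c" by (simp add: psih_def sum_distrib_left)
    finally show "?M x * (\<Sum>t\<in>G. gchar ns c t * complex_of_real (psi (gsub ns t x))) = ?M x * (gchar ns c x * psih psi c)"
      by simp
  qed
  also have "\<dots> = (\<Sum>x\<in>G. gchar ns c x * ?M x * psih psi c)"
    by (simp add: algebra_simps)
  also have "\<dots> = (\<Sum>x\<in>G. gchar ns c x * ?M x) * psih psi c"
    by (simp add: sum_distrib_right)
  finally show ?case using Suc.IH by simp
qed

lemma fcheck_exp: "fcheck ns psi c = exp (psih psi c)"
proof -
  let ?f = "\<lambda>t n. gchar ns c t * complex_of_real (matpow G (Qmat ns psi) n (gzero ns) t / fact n)"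
  have sm: "summable (?f t)" if "t \<in> G" for t
    using matpow_summable[OF that, of psi "gzero ns"]
    by (intro summable_mult) (simp only: summable_complex_of_real)
  have "fcheck ns psi c = (\<Sum>t\<in>G. \<Sum>n. ?f t n)"
    unfolding fcheck_def fourier_def fedge_def Pmat_def mexp_def
  proof (rule sum.cong[OF refl])
    fix t assume t: "t \<in> G"
    let ?g = "\<lambda>n. matpow G (Qmat ns psi) n (gzero ns) t / fact n"
    have sc: "summable (\<lambda>n. complex_of_real (?g n))"
      by (simp only: summable_complex_of_real) (rule matpow_summable[OF t])
    have "gchar ns c t * complex_of_real (suminf ?g) = gchar ns c t * (\<Sum>n. complex_of_real (?g n))"
      by (subst suminf_of_real[OF matpow_summable[OF t]]) (rule refl)
    also have "\<dots> = (\<Sum>n. gchar ns c t * complex_of_real (?g n))"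
      by (rule suminf_mult[OF sc, symmetric])
    finally show "gchar ns c t * complex_of_real (suminf ?g) = (\<Sum>n. ?f t n)" .
  qed
  also have "\<dots> = (\<Sum>n. \<Sum>t\<in>G. ?f t n)" by (rule suminf_sum[symmetric]) (rule sm)
  also have "\<dots> = (\<Sum>n. (psih psi c)^n /\<^sub>R fact n)"
  proof (rule suminf_cong)
    fix n
    have "(\<Sum>t\<in>G. ?f t n) = (\<Sum>t\<in>G. gchar ns c t * complex_of_real (matpow G (Qmat ns psi) n (gzero ns) t)) / of_real (fact n)"
      by (simp add: sum_divide_distrib)
    then show "(\<Sum>t\<in>G. ?f t n) = (psih psi c)^n /\<^sub>R fact n"
      by (simp add: matpow_fourier scaleR_conv_of_real divide_inverse mult.commute)
  qed
  also have "\<dots> = exp (psih psi c)" by (simp add: exp_def)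
  finally show ?thesis .
qed

lemma psih_neg: "\<forall>g\<in>G. psi g = psi (gneg ns g) \<Longrightarrow> psih psi (gneg ns h) = psih psi h"
proof -
  assume s: "\<forall>g\<in>G. psi g = psi (gneg ns g)"
  have "psih psi (gneg ns h) = (\<Sum>t\<in>G. gchar ns h (gneg ns t) * complex_of_real (psi t))"
    by (simp add: psih_def gchar_neg_swap)
  also have "\<dots> = (\<Sum>s\<in>G. gchar ns h (gneg ns (gneg ns s)) * complex_of_real (psi (gneg ns s)))"
    by (rule sum_neg[of "\<lambda>t. gchar ns h (gneg ns t) * complex_of_real (psi t)"])
  also have "\<dots> = psih psi h" unfolding psih_def
  proof (rule sum.cong[OF refl])
    fix x assume x: "x \<in> G"
    have "psi (gneg ns x) = psi x" using s x by metis
    then show "gchar ns h (gneg ns (gneg ns x)) * complex_of_real (psi (gneg ns x)) = gchar ns h x * complex_of_real (psi x)"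
      using x by (simp add: gneg_gneg)
  qed
  finally show ?thesis .
qed

lemma psih_zero: "(\<Sum>g\<in>G. psi g) = 0 \<Longrightarrow> psih psi (gzero ns) = 0"
  unfolding psih_def by (simp flip: of_real_sum)

end


abbreviation SE :: "'v set set \<Rightarrow> 'v list \<Rightarrow> bool" where
  "SE E \<equiv> successively (\<lambda>x y. {x, y} \<in> E)"

lemma is_path_SE: "is_path E p a b \<longleftrightarrow> p \<noteq> [] \<and> hd p = a \<and> last p = b \<and> distinct p \<and> SE E p"
  unfolding is_path_def successively_conv_nth by blast

lemma is_cycle_SE: "is_cycle E p \<longleftrightarrow> length p \<ge> 3 \<and> distinct p \<and> SE E p \<and> {last p, hd p} \<in> E"
  unfolding is_cycle_def successively_conv_nth by blast

lemma SE_rev: "SE E (rev xs) = SE E xs"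
  by (simp add: insert_commute)

lemma path_unique:
  assumes nocyc: "\<nexists>c. is_cycle E c"
  shows "is_path E p a b \<Longrightarrow> is_path E q a b \<Longrightarrow> p = q"
proof (induction p arbitrary: a q)
  case Nil then show ?case by (simp add: is_path_SE)
next
  case (Cons x p')
  have ax: "x = a" using Cons.prems by (simp add: is_path_SE)
  obtain q' where q: "q = a # q'" using Cons.prems(2) by (cases q) (auto simp: is_path_SE)
  show ?case
  proof (cases "p' = []")
    case True
    then have "b = a" using Cons.prems ax by (simp add: is_path_SE)
    have "q' = []"
    proof (rule ccontr)
      assume "q' \<noteq> []"
      then have "last q' \<in> set q'" by simp
      moreover have "last q' = a" using Cons.prems(2) \<open>b = a\<close> \<open>q' \<noteq> []\<close> q by (simp add: is_path_SE)
      ultimately show False using Cons.prems(2) q by (simp add: is_path_SE)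
    qed
    then show ?thesis using True q ax by simp
  next
    case False
    have ab: "last p' = b" "a \<notin> set p'" "distinct p'" "SE E p'" "{a, hd p'} \<in> E"
      using Cons.prems(1) False ax by (auto simp: is_path_SE successively_Cons)
    have q'ne: "q' \<noteq> []"
    proof
      assume "q' = []"
      then have "b = a" using Cons.prems(2) q by (simp add: is_path_SE)
      then show False using ab False by (metis last_in_set)
    qed
    have qb: "last q' = b" "a \<notin> set q'" "distinct q'" "SE E q'" "{a, hd q'} \<in> E"
      using Cons.prems(2) q'ne q by (auto simp: is_path_SE successively_Cons)
    show ?thesis
    proof (cases "hd p' = hd q'")
      case True
      have "is_path E p' (hd p') b" "is_path E q' (hd p') b"
        using ab qb False q'ne True by (auto simp: is_path_SE)
      then have "p' = q'" by (rule Cons.IH)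
      then show ?thesis using q ax by simp
    next
      case hne: False
      define p1 where "p1 = takeWhile (\<lambda>x. x \<notin> set q') p'"
      define p2 where "p2 = dropWhile (\<lambda>x. x \<notin> set q') p'"
      have pp: "p' = p1 @ p2" unfolding p1_def p2_def by simp
      have "b \<in> set p'" "b \<in> set q'" using ab qb False q'ne by (metis last_in_set)+
      then have "p2 \<noteq> []" unfolding p2_def by (simp add: dropWhile_eq_Nil_conv) blast
      then obtain y p3 where p2: "p2 = y # p3" by (cases p2) auto
      have yq: "y \<in> set q'" using p2 unfolding p2_def
        by (metis dropWhile_eq_Cons_conv)
      have p1q: "set p1 \<inter> set q' = {}" unfolding p1_def by (auto dest: set_takeWhileD)
      obtain q1 q2 where qq: "q' = q1 @ y # q2" using yq by (meson split_list)
      define c where "c = a # p1 @ [y] @ rev q1"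
      have "is_cycle E c"
        unfolding is_cycle_SE
      proof (intro conjI)
        show "3 \<le> length c"
        proof -
          have "p1 \<noteq> [] \<or> q1 \<noteq> []"
          proof (rule ccontr)
            assume "\<not> (p1 \<noteq> [] \<or> q1 \<noteq> [])"
            then have "hd p' = y" "hd q' = y" using pp p2 qq by auto
            then show False using hne by simp
          qed
          then show ?thesis unfolding c_def by (auto simp: Suc_le_eq)
        qed
        show "distinct c" unfolding c_def
          using ab(2,3) qb(2,3) pp p2 qq p1q by auto
        have s1: "SE E (p1 @ [y])" using ab(4) pp p2 by (simp add: successively_append_iff successively_Cons)
        have s2: "SE E (rev q1)"
        proof -
          have "SE E q1" using qb(4) qq by (simp add: successively_append_iff)
          then show ?thesis by (simp only: SE_rev)
        qed
        have s3: "q1 \<noteq> [] \<Longrightarrow> {y, last q1} \<in> E"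
          using qb(4) qq by (simp add: successively_append_iff insert_commute)
        have s4: "{a, hd (p1 @ [y])} \<in> E" using ab(5) pp p2 by (cases p1) auto
        have s5: "SE E ((p1 @ [y]) @ rev q1)"
          using s1 s2 s3 by (simp only: successively_append_iff) (auto simp: hd_rev)
        have s6: "hd ((p1 @ [y]) @ rev q1) = hd (p1 @ [y])" by (cases p1) simp_all
        show "SE E c" unfolding c_def
          using s4 s5 s6 by (simp only: successively_Cons append_assoc[symmetric]) simp
        show "{last c, hd c} \<in> E"
          using qb(5) qq unfolding c_def by (cases q1) (auto simp: last_rev insert_commute)
      qed
      then show ?thesis using nocyc by blast
    qed
  qed
qed


lemma no_shortcut:
  assumes nocyc: "\<nexists>c. is_cycle E c"
    and p: "is_path E p a b" and u: "u \<in> set p" and e: "{u, b} \<in> E"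
  shows "u = b \<or> (length p \<ge> 2 \<and> u = p ! (length p - 2))"
proof -
  obtain t where t: "t < length p" "p ! t = u" using u by (auto simp: in_set_conv_nth)
  have pp: "p \<noteq> []" "last p = b" "distinct p" "SE E p" using p by (auto simp: is_path_SE)
  show ?thesis
  proof (cases "t + 3 \<le> length p")
    case True
    define c where "c = drop t p"
    have "is_cycle E c" unfolding is_cycle_SE
    proof (intro conjI)
      show "3 \<le> length c" using True unfolding c_def by simp
      show "distinct c" using pp unfolding c_def by simp
      have "SE E (take t p @ c)" using pp unfolding c_def by simp
      then show "SE E c" by (simp only: successively_append_iff)
      have "hd c = u" unfolding c_def using t hd_drop_conv_nth[of t p] by simp
      moreover have "last c = b" unfolding c_def using t pp by simp
      ultimately show "{last c, hd c} \<in> E" using e by (simp add: insert_commute)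
    qed
    then show ?thesis using nocyc by blast
  next
    case False
    show ?thesis
    proof (cases "t = length p - 1")
      case True
      then have "u = last p" using t pp by (simp add: last_conv_nth)
      then show ?thesis using pp by simp
    next
      case f2: False
      then have "t = length p - 2" "length p \<ge> 2" using t False by linarith+
      then show ?thesis using t by simp
    qed
  qed
qed

locale tree =
  fixes V :: "'v set" and E :: "'v set set" and r :: 'v
  assumes tree: "is_tree V E" and rV: "r \<in> V"
begin

lemma finV: "finite V" using tree by (simp add: is_tree_def)
lemma nocyc: "\<nexists>c. is_cycle E c" using tree by (simp add: is_tree_def)
lemma edgeE: "d \<in> E \<Longrightarrow> \<exists>u v. d = {u, v} \<and> u \<noteq> v \<and> u \<in> V \<and> v \<in> V"
  using tree by (simp add: is_tree_def)
lemma edgeV: "{u, v} \<in> E \<Longrightarrow> u \<noteq> v \<and> u \<in> V \<and> v \<in> V"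
  using edgeE[of "{u,v}"] by (auto simp: doubleton_eq_iff)
lemma conn: "u \<in> V \<Longrightarrow> v \<in> V \<Longrightarrow> \<exists>p. is_path E p u v"
  using tree by (simp add: is_tree_def)

definition path :: "'v \<Rightarrow> 'v list" where "path v = (THE p. is_path E p r v)"
definition par :: "'v \<Rightarrow> 'v" where "par v = path v ! (length (path v) - 2)"
definition anc :: "'v \<Rightarrow> 'v set" where "anc v = set (tl (path v))"

lemma path_ok: "v \<in> V \<Longrightarrow> is_path E (path v) r v"
proof -
  assume v: "v \<in> V"
  obtain p where p: "is_path E p r v" using conn[OF rV v] by blast
  show ?thesis unfolding path_def
    by (rule theI[of _ p]) (use p path_unique[OF nocyc] in blast)+
qed

lemma path_eq: "v \<in> V \<Longrightarrow> is_path E p r v \<Longrightarrow> path v = p"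
  using path_ok path_unique[OF nocyc] by blast

lemma path_r: "path r = [r]"
  using path_eq[OF rV, of "[r]"] by (simp add: is_path_SE)

lemma path_V: "is_path E p a b \<Longrightarrow> a \<in> V \<Longrightarrow> set p \<subseteq> V"
proof
  fix x assume p: "is_path E p a b" and a: "a \<in> V" and x: "x \<in> set p"
  then obtain t where t: "t < length p" "p ! t = x" by (auto simp: in_set_conv_nth)
  show "x \<in> V"
  proof (cases "Suc t < length p")
    case True
    then have "{p!t, p!Suc t} \<in> E" using p by (simp add: is_path_def)
    then show ?thesis using edgeV t by blast
  next
    case False
    show ?thesis
    proof (cases t)
      case 0 then show ?thesis using p a t by (cases p) (auto simp: is_path_def)
    next
      case (Suc t')
      then have "{p!t', p!Suc t'} \<in> E" using p t unfolding is_path_def by blast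
      then have "{p!t', p!t} \<in> E" using Suc by simp
      then show ?thesis using edgeV t by blast
    qed
  qed
qed

lemma path_sub: "v \<in> V \<Longrightarrow> set (path v) \<subseteq> V"
  using path_V[OF path_ok rV] by blast

lemma len2: "v \<in> V \<Longrightarrow> v \<noteq> r \<Longrightarrow> length (path v) \<ge> 2"
proof -
  assume v: "v \<in> V" "v \<noteq> r"
  have p: "path v \<noteq> []" "hd (path v) = r" "last (path v) = v" using path_ok[OF v(1)] by (auto simp: is_path_def)
  show ?thesis
  proof (rule ccontr)
    assume "\<not> 2 \<le> length (path v)"
    then have "length (path v) = 1" using p(1) by (cases "length (path v)") auto
    then obtain x where "path v = [x]" by (auto simp: length_Suc_conv)
    then show False using p v by simp
  qed
qed

lemma path_par: assumes v: "v \<in> V" "v \<noteq> r"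
  shows "path v = path (par v) @ [v]" "par v \<in> V" "{par v, v} \<in> E" "par v \<noteq> v"
proof -
  let ?p = "path v"
  have p: "?p \<noteq> []" "hd ?p = r" "last ?p = v" "distinct ?p" "SE E ?p"
    using path_ok[OF v(1)] by (auto simp: is_path_SE)
  have l: "length ?p \<ge> 2" by (rule len2[OF v])
  have bl: "butlast ?p \<noteq> []" using l by (cases ?p) auto
  have hb: "hd (butlast ?p) = r" using p l by (cases ?p) auto
  have lb: "last (butlast ?p) = par v" using l bl unfolding par_def
    by (simp add: last_conv_nth nth_butlast numeral_2_eq_2)
  have pe: "?p = butlast ?p @ [v]" using p append_butlast_last_id[of ?p] by simp
  have sb: "SE E (butlast ?p)" using p(5) pe by (metis successively_append_iff)
  have db: "distinct (butlast ?p)" using p(4) by (simp add: distinct_butlast)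
  have pv: "par v \<in> V" using path_sub[OF v(1)] l unfolding par_def by (auto simp: subset_iff)
  have "is_path E (butlast ?p) r (par v)" using bl hb lb sb db by (simp add: is_path_SE)
  then have "path (par v) = butlast ?p" by (rule path_eq[OF pv])
  then show "?p = path (par v) @ [v]" using pe by simp
  show "par v \<in> V" by (rule pv)
  have "{?p ! (length ?p - 2), ?p ! Suc (length ?p - 2)} \<in> E"
    using successively_nth[OF p(5), of "length ?p - 2"] l by simp
  moreover have "Suc (length ?p - 2) = length ?p - 1" using l by simp
  ultimately show "{par v, v} \<in> E" using p(3) p(1) unfolding par_def by (simp add: last_conv_nth)
  then show "par v \<noteq> v" using edgeV by blast
qed

lemma anc_r: "anc r = {}" by (simp add: anc_def path_r)

lemma anc_par: assumes v: "v \<in> V" "v \<noteq> r"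
  shows "anc v = insert v (anc (par v))" "v \<notin> anc (par v)"
proof -
  have pp: "path v = path (par v) @ [v]" "path (par v) \<noteq> []"
    using path_par[OF v] path_ok[OF path_par(2)[OF v]] by (auto simp: is_path_def)
  then show "anc v = insert v (anc (par v))" unfolding anc_def by (cases "path (par v)") auto
  have "distinct (path v)" using path_ok[OF v(1)] by (simp add: is_path_def)
  then show "v \<notin> anc (par v)" using pp unfolding anc_def by (cases "path (par v)") auto
qed

lemma anc_sub: "v \<in> V \<Longrightarrow> anc v \<subseteq> V - {r}"
proof -
  assume v: "v \<in> V"
  have p: "path v \<noteq> []" "hd (path v) = r" "distinct (path v)" using path_ok[OF v] by (auto simp: is_path_def)
  then have "path v = r # tl (path v)" by (cases "path v") auto
  then show ?thesis using path_sub[OF v] p(3) unfolding anc_def by (metis Diff_empty distinct.simps(2) list.set_sel(2) p(1) set_subset_Cons subset_Diff_insert subset_trans tl_Nil)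
qed

lemma anc_self: "v \<in> V \<Longrightarrow> v \<noteq> r \<Longrightarrow> v \<in> anc v"
  using anc_par by blast

lemma V_induct: assumes "\<And>v. v \<in> V \<Longrightarrow> (v \<noteq> r \<Longrightarrow> P (par v)) \<Longrightarrow> P v" "v \<in> V"
  shows "P v"
  using assms(2)
proof (induction "length (path v)" arbitrary: v rule: less_induct)
  case less
  show ?case
  proof (rule assms(1)[OF less.prems])
    assume "v \<noteq> r"
    then have "length (path (par v)) < length (path v)" "par v \<in> V"
      using path_par[OF less.prems] by auto
    then show "P (par v)" using less.hyps by blast
  qed
qed

lemma dedges_char: "dedges E r = (\<lambda>v. (par v, v)) ` (V - {r})"
proof
  show "dedges E r \<subseteq> (\<lambda>v. (par v, v)) ` (V - {r})"
  proof
    fix x assume "x \<in> dedges E r"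
    then obtain u v p where x: "x = (u, v)" "{u, v} \<in> E" "is_path E p r v" "u \<in> set p"
      by (auto simp: dedges_def)
    have uv: "u \<noteq> v" "v \<in> V" using edgeV[OF x(2)] by auto
    have pe: "path v = p" by (rule path_eq[OF uv(2) x(3)])
    have vr: "v \<noteq> r"
    proof
      assume "v = r"
      then have "u = r" using pe x(4) path_r by auto
      then show False using uv \<open>v = r\<close> by simp
    qed
    have "u = p ! (length p - 2)" using no_shortcut[OF nocyc x(3) x(4)] x(2) uv(1)
      by (auto simp: insert_commute)
    then have "u = par v" using pe by (simp add: par_def)
    then show "x \<in> (\<lambda>v. (par v, v)) ` (V - {r})" using x uv vr by auto
  qed
next
  show "(\<lambda>v. (par v, v)) ` (V - {r}) \<subseteq> dedges E r"
  proof
    fix x assume "x \<in> (\<lambda>v. (par v, v)) ` (V - {r})"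
    then obtain v where v: "v \<in> V" "v \<noteq> r" "x = (par v, v)" by auto
    have "par v \<in> set (path (par v))" using path_ok[OF path_par(2)[OF v(1,2)]]
      by (metis is_path_def last_in_set)
    then have "par v \<in> set (path v)" using path_par(1)[OF v(1,2)] by simp
    then show "x \<in> dedges E r" using v path_par(3)[OF v(1,2)] path_ok[OF v(1)]
      by (auto simp: dedges_def)
  qed
qed

lemma par_inj: "inj_on (\<lambda>v. (par v, v)) (V - {r})" by (auto intro: inj_onI)

lemma edge_dir: assumes e: "{a, b} \<in> E"
  shows "(b \<in> V \<and> b \<noteq> r \<and> a = par b) \<or> (a \<in> V \<and> a \<noteq> r \<and> b = par a)"
proof -
  have ab: "a \<noteq> b" "a \<in> V" "b \<in> V" using edgeV[OF e] by auto
  show ?thesis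
  proof (cases "a \<in> set (path b)")
    case True
    have br: "b \<noteq> r" using True path_r ab by auto
    have "a = path b ! (length (path b) - 2)"
      using no_shortcut[OF nocyc path_ok[OF ab(3)] True e] ab by auto
    then show ?thesis using ab br by (simp add: par_def)
  next
    case False
    have pb: "path b \<noteq> []" "hd (path b) = r" "last (path b) = b" "distinct (path b)" "SE E (path b)"
      using path_ok[OF ab(3)] by (auto simp: is_path_SE)
    have "is_path E (path b @ [a]) r a"
      using pb False e by (auto simp: is_path_SE successively_append_iff insert_commute)
    then have pa: "path a = path b @ [a]" by (rule path_eq[OF ab(2)])
    have ar: "a \<noteq> r" using False pb by (metis hd_in_set)
    have "par a = b" unfolding par_def pa using pb
      by (simp add: nth_append last_conv_nth)
    then show ?thesis using ab ar by simp
  qed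
qed

lemma cut: assumes e: "{a, b} \<in> E" and w: "w \<in> anc a" "w \<notin> anc b"
  shows "a = w \<and> b = par w"
proof (cases "b \<in> V \<and> b \<noteq> r \<and> a = par b")
  case True
  then have "anc b = insert b (anc a)" using anc_par(1)[of b] by simp
  then show ?thesis using w by simp
next
  case False
  then have h: "a \<in> V" "a \<noteq> r" "b = par a" using edge_dir[OF e] by auto
  then have "anc a = insert a (anc b)" using anc_par(1)[of a] by simp
  then show ?thesis using w h by auto
qed

lemma crossing: "SE E p \<Longrightarrow> p \<noteq> [] \<Longrightarrow> w \<in> anc (hd p) \<Longrightarrow> w \<notin> anc (last p) \<Longrightarrow>
   \<exists>t. Suc t < length p \<and> p ! t = w \<and> p ! Suc t = par w"
proof (induction p)
  case Nil then show ?case by simp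
next
  case (Cons x p)
  show ?case
  proof (cases "p = []")
    case True then show ?thesis using Cons.prems by simp
  next
    case False
    have e: "{x, hd p} \<in> E" "SE E p" using Cons.prems(1) False by (auto simp: successively_Cons)
    show ?thesis
    proof (cases "w \<in> anc (hd p)")
      case True
      then obtain t where "Suc t < length p" "p ! t = w" "p ! Suc t = par w"
        using Cons.IH[OF e(2) False True] Cons.prems False by auto
      then show ?thesis by (intro exI[of _ "Suc t"]) auto
    next
      case False
      then have "x = w \<and> hd p = par w" using cut[OF e(1)] Cons.prems by simp
      then show ?thesis using \<open>p \<noteq> []\<close> by (intro exI[of _ 0]) (cases p, auto)
    qed
  qed
qed

lemma anc_mono: "x \<in> V \<Longrightarrow> w \<in> anc x \<Longrightarrow> anc w \<subseteq> anc x"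
proof -
  assume x: "x \<in> V"
  have "\<forall>w. w \<in> anc x \<longrightarrow> anc w \<subseteq> anc x"
  proof (rule V_induct[where P="\<lambda>x. \<forall>w. w \<in> anc x \<longrightarrow> anc w \<subseteq> anc x", OF _ x])
    fix v assume v: "v \<in> V" and IH: "v \<noteq> r \<Longrightarrow> \<forall>w. w \<in> anc (par v) \<longrightarrow> anc w \<subseteq> anc (par v)"
    show "\<forall>w. w \<in> anc v \<longrightarrow> anc w \<subseteq> anc v"
    proof (cases "v = r")
      case True then show ?thesis using anc_r by simp
    next
      case False
      then have a: "anc v = insert v (anc (par v))" using anc_par(1)[OF v] by simp
      show ?thesis
      proof (intro allI impI)
        fix w assume w: "w \<in> anc v"
        show "anc w \<subseteq> anc v"
        proof (cases "w = v")
          case True then show ?thesis by simp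
        next
          case False
          then have "w \<in> anc (par v)" using w a by simp
          then have "anc w \<subseteq> anc (par v)" using IH \<open>v \<noteq> r\<close> by blast
          then show ?thesis using a by blast
        qed
      qed
    qed
  qed
  then show "w \<in> anc x \<Longrightarrow> anc w \<subseteq> anc x" by blast
qed

end


locale spec = tree V E r for V :: "'v set" and E r +
  fixes i nu j k :: 'v and e :: "'v set"
  assumes rL: "r \<in> leaves V E" and eE: "e \<in> E" and e_def: "e = {i, nu}"
    and iL: "i \<in> leaves V E" and nuV: "nu \<in> V" and nuL: "nu \<notin> leaves V E"
    and jL: "j \<in> leaves V E" and kL: "k \<in> leaves V E" and ji: "j \<noteq> i" and ki: "k \<noteq> i"
    and pth: "\<exists>p. is_path E p j k \<and> nu \<in> set p"
begin

lemma leaves_V: "x \<in> leaves V E \<Longrightarrow> x \<in> V" by (simp add: leaves_def)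

lemma leafE: assumes x: "x \<in> leaves V E" and d: "d \<in> E" "x \<in> d" and d': "d' \<in> E" "x \<in> d'"
  shows "d = d'"
proof -
  have "card {e\<in>E. x \<in> e} = 1" using x by (simp add: leaves_def)
  then obtain a where a: "{e\<in>E. x \<in> e} = {a}" by (rule card_1_singletonE)
  have "d \<in> {e\<in>E. x \<in> e}" "d' \<in> {e\<in>E. x \<in> e}" using d d' by simp_all
  then show ?thesis unfolding a by simp
qed

lemma leaf_inner: assumes x: "x \<in> leaves V E" and p: "distinct p" "SE E p"
  and t: "p ! t = x" "0 < t" "Suc t < length p" shows False
proof -
  obtain s where s: "t = Suc s" using t by (cases t) auto
  have d1: "{p!s, p!Suc s} \<in> E" using successively_nth[OF p(2), of s] t s by simp
  have d2: "{p!t, p!Suc t} \<in> E" using successively_nth[OF p(2), of t] t by simp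
  have "{p!s, p!Suc s} = {p!t, p!Suc t}" using leafE[OF x d1 _ d2] s t by simp
  moreover have "p!s \<noteq> p!t" using nth_eq_iff_index_eq[OF p(1), of s t] s t(3) by simp
  ultimately have "p!s = p!Suc t" using s by (auto simp: doubleton_eq_iff)
  then show False using p(1) s t by (simp add: nth_eq_iff_index_eq)
qed

lemma leaf_not_anc: assumes x: "x \<in> leaves V E" "x \<noteq> r" and y: "y \<in> V" "x \<noteq> y"
  shows "x \<notin> anc y"
proof
  assume "x \<in> anc y"
  then obtain s where s: "s < length (tl (path y))" "tl (path y) ! s = x"
    unfolding anc_def by (auto simp: in_set_conv_nth)
  have p: "path y \<noteq> []" "last (path y) = y" "distinct (path y)" "SE E (path y)"
    using path_ok[OF y(1)] by (auto simp: is_path_SE)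
  have px: "path y ! Suc s = x" using s p(1) by (cases "path y") auto
  have "Suc s < length (path y)" using s by simp
  moreover have "Suc s \<noteq> length (path y) - 1"
    using px p(1,2) y(2) by (auto simp: last_conv_nth)
  ultimately have "Suc (Suc s) < length (path y)" by linarith
  then show False using leaf_inner[OF x(1) p(3,4) px] by simp
qed

lemma nur: "nu \<noteq> r" using nuL rL by auto

lemma nu_path: obtains p t where "is_path E p j k" "p ! t = nu" "0 < t" "Suc t < length p"
proof -
  obtain p where p: "is_path E p j k" "nu \<in> set p" using pth by blast
  then obtain t where t: "t < length p" "p ! t = nu" by (auto simp: in_set_conv_nth)
  have "t \<noteq> 0"
  proof
    assume "t = 0"
    then have "nu = j" using t p(1) by (cases p) (auto simp: is_path_def)
    then show False using jL nuL by simp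
  qed
  moreover have "t \<noteq> length p - 1" using t p(1) kL nuL by (auto simp: is_path_def last_conv_nth)
  ultimately have "0 < t" "Suc t < length p" using t(1) by linarith+
  then show ?thesis using that[OF p(1) t(2)] by simp
qed

lemma cross_fwd: assumes p: "is_path E p a b" and t: "p ! t = w" "t < length p"
  and w1: "w \<in> anc w" and w2: "w \<notin> anc b"
  shows "Suc t < length p \<and> p ! Suc t = par w"
proof -
  have pp: "p \<noteq> []" "last p = b" "distinct p" "SE E p" using p by (auto simp: is_path_SE)
  have se: "SE E (drop t p)" using pp(4) by (metis append_take_drop_id successively_append_iff)
  have hd: "hd (drop t p) = w" using t hd_drop_conv_nth[of t p] by simp
  have ld: "last (drop t p) = b" using t pp by simp
  have ne: "drop t p \<noteq> []" using t by simp
  obtain t' where t': "Suc t' < length (drop t p)" "drop t p ! t' = w" "drop t p ! Suc t' = par w"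
    using crossing[OF se ne, of w, unfolded hd ld, OF w1 w2] by blast
  have "p ! (t + t') = p ! t" using t' t by simp
  moreover have "t + t' < length p" using t' by simp
  ultimately have "t' = 0" using nth_eq_iff_index_eq[OF pp(3), of "t + t'" t] t by simp
  then show ?thesis using t' by simp
qed

lemma nu_anc_jk: "nu \<in> anc j \<or> nu \<in> anc k"
proof (rule ccontr)
  assume h: "\<not> (nu \<in> anc j \<or> nu \<in> anc k)"
  obtain p t where p: "is_path E p j k" "p ! t = nu" "0 < t" "Suc t < length p" by (rule nu_path)
  have nn: "nu \<in> anc nu" using anc_self[OF nuV nur] .
  have f: "p ! Suc t = par nu" using cross_fwd[OF p(1) p(2) _ nn] h p(4) by auto
  have p0: "p \<noteq> []" "hd p = j" "last p = k" "distinct p" "SE E p" using p(1) by (auto simp: is_path_SE)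
  have "SE E (rev p)" using p0(5) by (simp only: SE_rev)
  then have pr: "is_path E (rev p) k j" using p0 by (simp add: is_path_SE hd_rev last_rev del: successively_rev)
  have "rev p ! (length p - Suc t) = nu" using p by (simp add: rev_nth)
  then have "Suc (length p - Suc t) < length (rev p) \<and> rev p ! Suc (length p - Suc t) = par nu"
    using cross_fwd[OF pr _ _ nn] h p(4) by auto
  moreover have "rev p ! Suc (length p - Suc t) = p ! (t - 1)" using p(3,4) by (simp add: rev_nth Suc_diff_Suc)
  ultimately have "p ! (t - 1) = p ! Suc t" using f by simp
  then show False using p(1,3,4) by (simp add: is_path_def nth_eq_iff_index_eq)
qed

lemma F1: "anc nu \<subseteq> anc j \<union> anc k"
  using nu_anc_jk anc_mono[OF leaves_V[OF jL]] anc_mono[OF leaves_V[OF kL]] by blast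

lemma cross_pos: assumes p: "is_path E p a b" and w1: "w \<in> anc a" and w2: "w \<notin> anc b"
  obtains s where "Suc s < length p" "p ! s = w"
proof -
  have pp: "p \<noteq> []" "hd p = a" "last p = b" "SE E p" using p by (auto simp: is_path_SE)
  show ?thesis using crossing[OF pp(4) pp(1)] pp w1 w2 that by auto
qed

lemma F2: "anc j \<inter> anc k \<subseteq> anc nu"
proof
  fix w assume w: "w \<in> anc j \<inter> anc k"
  show "w \<in> anc nu"
  proof (rule ccontr)
    assume wn: "w \<notin> anc nu"
    obtain p t where p: "is_path E p j k" "p ! t = nu" "0 < t" "Suc t < length p" by (rule nu_path)
    have pp: "distinct p" "SE E p" "hd p = j" "last p = k" "p \<noteq> []" using p(1) by (auto simp: is_path_SE)
    have p1: "is_path E (take (Suc t) p) j nu"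
    proof -
      have "SE E (take (Suc t) p)" using pp(2) by (metis append_take_drop_id successively_append_iff)
      moreover have "hd (take (Suc t) p) = j" using pp(3,5) by (cases p) auto
      moreover have "last (take (Suc t) p) = nu"
      proof -
        have "take (Suc t) p \<noteq> []" "length (take (Suc t) p) = Suc t" using p(4) by auto
        then show ?thesis using p(2) by (simp add: last_conv_nth)
      qed
      moreover have "take (Suc t) p \<noteq> []" using pp(5) by simp
      ultimately show ?thesis using pp(1) by (simp add: is_path_SE)
    qed
    have wj: "w \<in> anc j" "w \<in> anc k" using w by auto
    obtain a where a: "Suc a < length (take (Suc t) p)" "take (Suc t) p ! a = w" by (rule cross_pos[OF p1 wj(1) wn])
    have p2: "is_path E (rev (drop t p)) k nu"
    proof -
      have "SE E (drop t p)" using pp(2) by (metis append_take_drop_id successively_append_iff)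
      then have "SE E (rev (drop t p))" by (simp only: SE_rev)
      moreover have "hd (rev (drop t p)) = k" using pp(4) p(4) by (simp add: hd_rev)
      moreover have "last (rev (drop t p)) = nu" using p(2,4) hd_drop_conv_nth[of t p] by (simp add: last_rev)
      moreover have "rev (drop t p) \<noteq> []" using p(4) by simp
      ultimately show ?thesis using pp(1) by (simp add: is_path_SE del: successively_rev)
    qed
    obtain b where b: "Suc b < length (rev (drop t p))" "rev (drop t p) ! b = w" by (rule cross_pos[OF p2 wj(2) wn])
    have lb: "Suc b < length p - t" using b(1) by simp
    have "rev (drop t p) ! b = drop t p ! (length p - t - Suc b)" using lb by (simp add: rev_nth)
    also have "\<dots> = p ! (t + (length p - t - Suc b))" using lb by simp
    finally have e1: "w = p ! (t + (length p - t - Suc b))" using b(2) by simp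
    have e2: "w = p ! a" using a by simp
    have i1: "a < t + (length p - t - Suc b)" "t + (length p - t - Suc b) < length p" "a < length p"
      using a(1) lb p(4) by simp_all
    have "a = t + (length p - t - Suc b)"
      using nth_eq_iff_index_eq[OF pp(1) i1(3) i1(2)] e1 e2 by simp
    then show False using i1(1) by simp
  qed
qed

lemma F3: assumes ir: "i \<noteq> r"
  shows "i \<in> V" "par i = nu" "anc i = insert i (anc nu)" "i \<notin> anc j" "i \<notin> anc k" "{par i, i} = e"
proof -
  show iV: "i \<in> V" using leaves_V[OF iL] .
  have d: "{par i, i} \<in> E" "par i \<noteq> i" using path_par[OF iV ir] by auto
  have "{par i, i} = e" using leafE[OF iL d(1) _ eE] e_def by simp
  then show "par i = nu" using d(2) e_def by (auto simp: doubleton_eq_iff)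
  then show "anc i = insert i (anc nu)" using anc_par(1)[OF iV ir] by simp
  show "i \<notin> anc j" using leaf_not_anc[OF iL ir leaves_V[OF jL]] ji by auto
  show "i \<notin> anc k" using leaf_not_anc[OF iL ir leaves_V[OF kL]] ki by auto
  show "{par i, i} = e" by fact
qed

lemma F4: assumes ir: "i = r"
  shows "par nu = r" "anc nu = {nu}" "nu \<in> anc j" "nu \<in> anc k" "{par nu, nu} = e"
proof -
  have rn: "r \<noteq> nu" using nur by simp
  have "is_path E [r, nu] r nu" using rn eE e_def ir by (simp add: is_path_SE)
  then have pn: "path nu = [r, nu]" by (rule path_eq[OF nuV])
  show "par nu = r" by (simp add: par_def pn)
  show "anc nu = {nu}" by (simp add: anc_def pn)
  show "{par nu, nu} = e" using e_def ir by (simp add: par_def pn)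
  have gen: "nu \<in> anc x" if x: "x \<in> V" "x \<noteq> r" for x
  proof -
    have p: "path x \<noteq> []" "hd (path x) = r" "SE E (path x)" using path_ok[OF x(1)] by (auto simp: is_path_SE)
    have l: "length (path x) \<ge> 2" by (rule len2[OF x])
    then obtain y ys where py: "path x = r # y # ys" using p by (cases "path x"; cases "tl (path x)") auto
    have "{r, y} \<in> E" using p(3) py by simp
    then have "{r, y} = e" using leafE[OF rL _ _ eE] e_def ir by simp
    then have "y = nu" using e_def ir rn by (auto simp: doubleton_eq_iff)
    then show ?thesis by (simp add: anc_def py)
  qed
  show "nu \<in> anc j" using gen[OF leaves_V[OF jL]] ji ir by simp
  show "nu \<in> anc k" using gen[OF leaves_V[OF kL]] ki ir by simp
qed

end



locale model = grp ns + tree V E r for ns and V :: "'v set" and E r +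
  fixes psi :: "'v set \<Rightarrow> int list \<Rightarrow> real"
begin

abbreviation "L \<equiv> leaves V E"

definition fs :: "('v \<Rightarrow> int list) \<Rightarrow> 'v \<Rightarrow> int list" where
  "fs \<tau> v = foldl (\<lambda>a w. gadd ns a (\<tau> w)) (gzero ns) (tl (path v))"

definition Phi :: "('v \<Rightarrow> int list) \<Rightarrow> 'v \<Rightarrow> int list" where
  "Phi \<tau> = restrict (fs \<tau>) V"

definition Psi :: "('v \<Rightarrow> int list) \<Rightarrow> 'v \<Rightarrow> int list" where
  "Psi \<sigma> = restrict (\<lambda>v. gsub ns (\<sigma> v) (\<sigma> (par v))) (V - {r})"

lemma foldl_G: "a0 \<in> G \<Longrightarrow> foldl (\<lambda>a w. gadd ns a (\<tau> w)) a0 xs \<in> G"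
  by (induction xs arbitrary: a0) auto

lemma foldl_char: "gchar ns c (foldl (\<lambda>a w. gadd ns a (\<tau> w)) a0 xs)
   = gchar ns c a0 * prod_list (map (\<lambda>w. gchar ns c (\<tau> w)) xs)"
  by (induction xs arbitrary: a0) (auto simp: gchar_add2)

lemma fs_G: "fs \<tau> v \<in> G" unfolding fs_def by (rule foldl_G) simp

lemma fs_r: "fs \<tau> r = gzero ns" by (simp add: fs_def path_r)

lemma fs_par: "v \<in> V \<Longrightarrow> v \<noteq> r \<Longrightarrow> fs \<tau> v = gadd ns (fs \<tau> (par v)) (\<tau> v)"
proof -
  assume v: "v \<in> V" "v \<noteq> r"
  have pp: "path v = path (par v) @ [v]" "path (par v) \<noteq> []"
    using path_par[OF v] path_ok[OF path_par(2)[OF v]] by (auto simp: is_path_def)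
  then have "tl (path v) = tl (path (par v)) @ [v]" by (cases "path (par v)") auto
  then show ?thesis unfolding fs_def by simp
qed

lemma fs_char: "v \<in> V \<Longrightarrow> gchar ns c (fs \<tau> v) = (\<Prod>w\<in>anc v. gchar ns c (\<tau> w))"
proof -
  assume v: "v \<in> V"
  have "distinct (tl (path v))" using path_ok[OF v] by (simp add: is_path_def distinct_tl)
  then show ?thesis unfolding fs_def foldl_char anc_def
    by (simp add: prod.distinct_set_conv_list)
qed

definition "Sg = {\<sigma> \<in> PiE V (\<lambda>_. G). \<sigma> r = gzero ns}"
definition "Tg = PiE (V - {r}) (\<lambda>_. G)"

lemma Phi_Psi: "\<sigma> \<in> Sg \<Longrightarrow> Phi (Psi \<sigma>) = \<sigma>"
proof -
  assume s: "\<sigma> \<in> Sg"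
  have "fs (Psi \<sigma>) v = \<sigma> v" if vV: "v \<in> V" for v
  proof (rule V_induct[where P="\<lambda>v. fs (Psi \<sigma>) v = \<sigma> v", OF _ vV])
    fix v assume v1: "v \<in> V" and IH: "v \<noteq> r \<Longrightarrow> fs (Psi \<sigma>) (par v) = \<sigma> (par v)"
    show "fs (Psi \<sigma>) v = \<sigma> v"
    proof (cases "v = r")
      case True then show ?thesis using s by (simp add: fs_r Sg_def)
    next
      case False
      have pv: "par v \<in> V" using path_par[OF v1 False] by simp
      have ih: "fs (Psi \<sigma>) (par v) = \<sigma> (par v)" using IH[OF False] by simp
      have "fs (Psi \<sigma>) v = gadd ns (fs (Psi \<sigma>) (par v)) (Psi \<sigma> v)" by (rule fs_par[OF v1 False])
      also have "\<dots> = gadd ns (\<sigma> (par v)) (gsub ns (\<sigma> v) (\<sigma> (par v)))"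
        unfolding ih using v1 False by (simp add: Psi_def)
      also have "\<dots> = \<sigma> v" using s pv v1 by (intro gadd_gsub) (auto simp: Sg_def)
      finally show ?thesis .
    qed
  qed
  then show ?thesis using s unfolding Phi_def Sg_def
    by (auto simp: fun_eq_iff PiE_def extensional_def)
qed

lemma Psi_Phi: "\<tau> \<in> Tg \<Longrightarrow> Psi (Phi \<tau>) = \<tau>"
proof -
  assume t: "\<tau> \<in> Tg"
  have "v \<in> V - {r} \<Longrightarrow> gsub ns (Phi \<tau> v) (Phi \<tau> (par v)) = \<tau> v" for v
  proof -
    assume v: "v \<in> V - {r}"
    have pv: "par v \<in> V" using path_par v by blast
    have "Phi \<tau> v = gadd ns (fs \<tau> (par v)) (\<tau> v)" using v fs_par by (simp add: Phi_def)
    moreover have "Phi \<tau> (par v) = fs \<tau> (par v)" using pv by (simp add: Phi_def)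
    ultimately show ?thesis using t v fs_G by (simp add: gsub_gadd_left Tg_def PiE_iff)
  qed
  then show ?thesis using t unfolding Psi_def Tg_def
    by (auto simp: fun_eq_iff PiE_def extensional_def)
qed

lemma Psi_T: "\<sigma> \<in> Sg \<Longrightarrow> Psi \<sigma> \<in> Tg" by (simp add: Psi_def Tg_def)
lemma Phi_S: "\<tau> \<in> Tg \<Longrightarrow> Phi \<tau> \<in> Sg" using rV by (simp add: Phi_def Sg_def fs_G fs_r)

lemma finS: "finite Sg" unfolding Sg_def
  by (rule finite_subset[of _ "PiE V (\<lambda>_. G)"]) (auto intro: finite_PiE finV)
lemma finT: "finite Tg" unfolding Tg_def using finV by (auto intro: finite_PiE)

lemma LV: "L \<subseteq> V" by (auto simp: leaves_def)

lemma q_step1: "qtrans ns V E r psi g =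
  (\<Sum>\<sigma>\<in>Sg. (\<Prod>x\<in>L. gchar ns (g x) (\<sigma> x)) *
     complex_of_real (\<Prod>(u, v)\<in>dedges E r. Pmat ns (psi {u, v}) (\<sigma> u) (\<sigma> v)))"
proof -
  let ?W = "\<lambda>\<sigma>. complex_of_real (\<Prod>(u, v)\<in>dedges E r. Pmat ns (psi {u, v}) (\<sigma> u) (\<sigma> v))"
  let ?F = "\<lambda>\<sigma>. (\<Prod>x\<in>L. gchar ns (g x) (\<sigma> x)) * ?W \<sigma>"
  have "qtrans ns V E r psi g = (\<Sum>h\<in>PiE L (\<lambda>_. G). \<Sum>\<sigma>\<in>{\<sigma>\<in>Sg. restrict \<sigma> L = h}. ?F \<sigma>)"
    unfolding qtrans_def
  proof (rule sum.cong[OF refl])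
    fix h assume h: "h \<in> PiE L (\<lambda>_. G)"
    have seteq: "{\<sigma> \<in> PiE V (\<lambda>_. G). \<sigma> r = gzero ns \<and> (\<forall>x\<in>L. \<sigma> x = h x)} = {\<sigma>\<in>Sg. restrict \<sigma> L = h}"
      using h by (auto simp: Sg_def fun_eq_iff PiE_def extensional_def)
    have "(\<Prod>x\<in>L. gchar ns (g x) (h x)) * complex_of_real (\<Sum>\<sigma>\<in>{\<sigma>\<in>Sg. restrict \<sigma> L = h}. \<Prod>(u, v)\<in>dedges E r. Pmat ns (psi {u, v}) (\<sigma> u) (\<sigma> v))
       = (\<Sum>\<sigma>\<in>{\<sigma>\<in>Sg. restrict \<sigma> L = h}. (\<Prod>x\<in>L. gchar ns (g x) (h x)) * ?W \<sigma>)"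
      by (simp add: sum_distrib_left)
    also have "\<dots> = (\<Sum>\<sigma>\<in>{\<sigma>\<in>Sg. restrict \<sigma> L = h}. ?F \<sigma>)"
    proof (rule sum.cong[OF refl])
      fix \<sigma> assume "\<sigma> \<in> {\<sigma>\<in>Sg. restrict \<sigma> L = h}"
      then have "\<And>x. x \<in> L \<Longrightarrow> h x = \<sigma> x" by auto
      then show "(\<Prod>x\<in>L. gchar ns (g x) (h x)) * ?W \<sigma> = ?F \<sigma>" by simp
    qed
    finally show "(\<Prod>x\<in>L. gchar ns (g x) (h x)) * complex_of_real (pprob ns V E r psi h) = (\<Sum>\<sigma>\<in>{\<sigma>\<in>Sg. restrict \<sigma> L = h}. ?F \<sigma>)"
      unfolding pprob_def seteq by simp
  qed
  also have "\<dots> = (\<Sum>\<sigma>\<in>Sg. ?F \<sigma>)"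
  proof (rule sum.group[OF finS])
    show "finite (PiE L (\<lambda>_. G))" using finV LV by (intro finite_PiE) (auto intro: finite_subset)
    show "(\<lambda>\<sigma>. restrict \<sigma> L) ` Sg \<subseteq> PiE L (\<lambda>_. G)" using LV by (auto simp: Sg_def)
  qed
  finally show ?thesis .
qed

lemma q_general: "qtrans ns V E r psi g =
  (\<Prod>w\<in>V - {r}. \<Sum>t\<in>G. (\<Prod>x\<in>{x\<in>L. w \<in> anc x}. gchar ns (g x) t) *
       complex_of_real (fedge ns (psi {par w, w}) t))"
proof -
  let ?W = "\<lambda>\<sigma>. complex_of_real (\<Prod>(u, v)\<in>dedges E r. Pmat ns (psi {u, v}) (\<sigma> u) (\<sigma> v))"
  let ?F = "\<lambda>\<sigma>. (\<Prod>x\<in>L. gchar ns (g x) (\<sigma> x)) * ?W \<sigma>"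
  let ?H = "\<lambda>w t. (\<Prod>x\<in>{x\<in>L. w \<in> anc x}. gchar ns (g x) t) * complex_of_real (fedge ns (psi {par w, w}) t)"
  have "(\<Sum>\<sigma>\<in>Sg. ?F \<sigma>) = (\<Sum>\<tau>\<in>Tg. ?F (Phi \<tau>))"
    by (rule sum.reindex_bij_witness[where i=Phi and j=Psi])
       (auto simp: Phi_Psi Psi_Phi Psi_T Phi_S)
  also have "\<dots> = (\<Sum>\<tau>\<in>Tg. \<Prod>w\<in>V - {r}. ?H w (\<tau> w))"
  proof (rule sum.cong[OF refl])
    fix \<tau> assume t: "\<tau> \<in> Tg"
    have W: "?W (Phi \<tau>) = (\<Prod>w\<in>V - {r}. complex_of_real (fedge ns (psi {par w, w}) (\<tau> w)))"
    proof -
      have "(\<Prod>(u, v)\<in>dedges E r. Pmat ns (psi {u, v}) (Phi \<tau> u) (Phi \<tau> v))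
          = (\<Prod>v\<in>V - {r}. Pmat ns (psi {par v, v}) (Phi \<tau> (par v)) (Phi \<tau> v))"
        unfolding dedges_char by (subst prod.reindex[OF par_inj]) simp
      also have "\<dots> = (\<Prod>v\<in>V - {r}. fedge ns (psi {par v, v}) (\<tau> v))"
      proof (rule prod.cong[OF refl])
        fix v assume v: "v \<in> V - {r}"
        have pv: "par v \<in> V" using path_par v by blast
        have "Phi \<tau> v = gadd ns (Phi \<tau> (par v)) (\<tau> v)" "Phi \<tau> (par v) \<in> G"
          using v pv fs_par fs_G by (auto simp: Phi_def)
        moreover have "\<tau> v \<in> G" using t v by (auto simp: Tg_def)
        ultimately show "Pmat ns (psi {par v, v}) (Phi \<tau> (par v)) (Phi \<tau> v) = fedge ns (psi {par v, v}) (\<tau> v)"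
          by (simp add: Pmat_shift)
      qed
      finally show ?thesis by simp
    qed
    have C: "(\<Prod>x\<in>L. gchar ns (g x) (Phi \<tau> x)) = (\<Prod>w\<in>V - {r}. \<Prod>x\<in>{x\<in>L. w \<in> anc x}. gchar ns (g x) (\<tau> w))"
    proof -
      have "(\<Prod>x\<in>L. gchar ns (g x) (Phi \<tau> x)) = (\<Prod>x\<in>L. \<Prod>w\<in>{w\<in>V - {r}. w \<in> anc x}. gchar ns (g x) (\<tau> w))"
      proof (rule prod.cong[OF refl])
        fix x assume x: "x \<in> L"
        then have xV: "x \<in> V" using LV by auto
        have "{w\<in>V - {r}. w \<in> anc x} = anc x" using anc_sub[OF xV] by auto
        then show "gchar ns (g x) (Phi \<tau> x) = (\<Prod>w\<in>{w\<in>V - {r}. w \<in> anc x}. gchar ns (g x) (\<tau> w))"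
          using xV by (simp add: Phi_def fs_char)
      qed
      also have "\<dots> = (\<Prod>w\<in>V - {r}. \<Prod>x\<in>{x\<in>L. w \<in> anc x}. gchar ns (g x) (\<tau> w))"
        using finV LV by (intro prod.swap_restrict) (auto intro: finite_subset)
      finally show ?thesis .
    qed
    show "?F (Phi \<tau>) = (\<Prod>w\<in>V - {r}. ?H w (\<tau> w))"
      unfolding C W by (simp add: prod.distrib)
  qed
  also have "\<dots> = (\<Prod>w\<in>V - {r}. \<Sum>t\<in>G. ?H w t)"
    unfolding Tg_def using finV by (subst prod_sum_PiE) auto
  finally show ?thesis using q_step1 by simp
qed

end


lemma Lfac:
  fixes X Y f :: "'a \<Rightarrow> complex"
  assumes XY: "\<And>t. t \<in> A \<Longrightarrow> X t * Y t = 1"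
    and FX: "(\<Sum>t\<in>A. X t * f t) = F" and FY: "(\<Sum>t\<in>A. Y t * f t) = F" and F0: "(\<Sum>t\<in>A. f t) = 1"
  shows "(\<Sum>t\<in>A. (if P then X t else 1) * (if Q then Y t else 1) * f t) = (if P = Q then 1 else F)"
proof (cases P; cases Q)
  assume "P" "Q"
  have "(\<Sum>t\<in>A. X t * Y t * f t) = (\<Sum>t\<in>A. f t)" using XY by (intro sum.cong) auto
  then show ?thesis using \<open>P\<close> \<open>Q\<close> F0 by simp
qed (use FX FY F0 in auto)

locale final = model ns V E r psi + spec V E r i nu j k e
  for ns V E r psi i nu j k e +
  fixes h
  assumes ep: "\<forall>d\<in>E. edge_param ns (psi d)" and hG: "h \<in> G"
begin

definition "Fw w = fcheck ns (psi {par w, w}) h"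

lemma jk: "j \<noteq> k"
proof
  assume jk: "j = k"
  obtain p t where p: "is_path E p j k" "p ! t = nu" "0 < t" "Suc t < length p" by (rule nu_path)
  obtain a p' where ap: "p = a # p'" using p(4) by (cases p) auto
  have "p' \<noteq> []" using p(3,4) ap by auto
  then have "last p = last p'" "last p' \<in> set p'" using ap by auto
  moreover have "hd p = a" "a \<notin> set p'" "hd p = j" "last p = k" using p(1) ap by (auto simp: is_path_def)
  ultimately show False using jk by simp
qed

lemma facts_w: assumes w: "w \<in> V - {r}"
  shows "(\<Sum>t\<in>G. gchar ns h t * complex_of_real (fedge ns (psi {par w, w}) t)) = Fw w"
    "(\<Sum>t\<in>G. gchar ns (gneg ns h) t * complex_of_real (fedge ns (psi {par w, w}) t)) = Fw w"
    "(\<Sum>t\<in>G. complex_of_real (fedge ns (psi {par w, w}) t)) = 1"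
    "Fw w \<noteq> 0"
proof -
  have "{par w, w} \<in> E" using path_par w by blast
  then have epw: "edge_param ns (psi {par w, w})" using ep by blast
  have s0: "(\<Sum>g\<in>G. psi {par w, w} g) = 0" and sym: "\<forall>g\<in>G. psi {par w, w} g = psi {par w, w} (gneg ns g)"
    using epw unfolding edge_param_def by blast+
  show "(\<Sum>t\<in>G. gchar ns h t * complex_of_real (fedge ns (psi {par w, w}) t)) = Fw w"
    by (simp add: Fw_def fcheck_def fourier_def)
  show "(\<Sum>t\<in>G. gchar ns (gneg ns h) t * complex_of_real (fedge ns (psi {par w, w}) t)) = Fw w"
  proof -
    have "(\<Sum>t\<in>G. gchar ns (gneg ns h) t * complex_of_real (fedge ns (psi {par w, w}) t)) = fcheck ns (psi {par w, w}) (gneg ns h)"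
      by (simp add: fcheck_def fourier_def)
    also have "\<dots> = exp (psih (psi {par w, w}) (gneg ns h))" by (rule fcheck_exp)
    also have "\<dots> = exp (psih (psi {par w, w}) h)" by (simp only: psih_neg[OF sym])
    also have "\<dots> = Fw w" unfolding Fw_def by (rule fcheck_exp[symmetric])
    finally show ?thesis .
  qed
  have "fcheck ns (psi {par w, w}) (gzero ns) = 1"
    by (simp add: fcheck_exp psih_zero[OF s0])
  then show "(\<Sum>t\<in>G. complex_of_real (fedge ns (psi {par w, w}) t)) = 1"
    by (simp add: fcheck_def fourier_def)
  show "Fw w \<noteq> 0" by (simp add: Fw_def fcheck_exp)
qed

lemma prodw: assumes w: "w \<in> V - {r}"
  shows "(\<Prod>x\<in>{x\<in>L. w \<in> anc x}. gchar ns (wvec ns V E i j k a b c x) t) =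
    (if w \<in> anc i then gchar ns a t else 1) * (if w \<in> anc j then gchar ns b t else 1) *
    (if w \<in> anc k then gchar ns c t else 1)"
proof -
  let ?g = "\<lambda>x. if w \<in> anc x then gchar ns (wvec ns V E i j k a b c x) t else 1"
  have fL: "finite L" using finV LV by (auto intro: finite_subset)
  have sub: "{i, j, k} \<subseteq> L" using iL jL kL by auto
  have "(\<Prod>x\<in>{x\<in>L. w \<in> anc x}. gchar ns (wvec ns V E i j k a b c x) t) = (\<Prod>x\<in>L. ?g x)"
    using fL by (simp add: prod.inter_filter)
  also have "\<dots> = (\<Prod>x\<in>{i, j, k}. ?g x)"
    using fL sub by (intro prod.mono_neutral_right) (auto simp: wvec_def)
  also have "\<dots> = ?g i * ?g j * ?g k"
    using ji ki jk by (simp add: mult.assoc)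
  finally show ?thesis using iL jL kL ji ki jk by (simp add: wvec_def)
qed

lemma if_gz: "(if P then gchar ns (gzero ns) t else 1) = 1" by simp

definition "Di w = (w \<in> anc i)"
definition "Dj w = (w \<in> anc j)"
definition "Dk w = (w \<in> anc k)"

lemma q1: "qtrans ns V E r psi (wvec ns V E i j k h (gneg ns h) (gzero ns)) =
  (\<Prod>w\<in>V - {r}. if Di w = Dj w then 1 else Fw w)"
  unfolding q_general
proof (rule prod.cong[OF refl])
  fix w assume w: "w \<in> V - {r}"
  note f = facts_w[OF w]
  have "(\<Sum>t\<in>G. (\<Prod>x\<in>{x \<in> L. w \<in> anc x}. gchar ns (wvec ns V E i j k h (gneg ns h) (gzero ns) x) t) * complex_of_real (fedge ns (psi {par w, w}) t))
     = (\<Sum>t\<in>G. (if Di w then gchar ns h t else 1) * (if Dj w then gchar ns (gneg ns h) t else 1) * complex_of_real (fedge ns (psi {par w, w}) t))"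
    unfolding prodw[OF w] Di_def Dj_def by (simp add: if_gz)
  also have "\<dots> = (if Di w = Dj w then 1 else Fw w)"
    by (rule Lfac[OF _ f(1) f(2) f(3)]) (metis gchar_neg_mult mult.commute)
  finally show "(\<Sum>t\<in>G. (\<Prod>x\<in>{x \<in> L. w \<in> anc x}. gchar ns (wvec ns V E i j k h (gneg ns h) (gzero ns) x) t) * complex_of_real (fedge ns (psi {par w, w}) t))
     = (if Di w = Dj w then 1 else Fw w)" .
qed

lemma q2: "qtrans ns V E r psi (wvec ns V E i j k (gneg ns h) (gzero ns) h) =
  (\<Prod>w\<in>V - {r}. if Dk w = Di w then 1 else Fw w)"
  unfolding q_general
proof (rule prod.cong[OF refl])
  fix w assume w: "w \<in> V - {r}"
  note f = facts_w[OF w]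
  have "(\<Sum>t\<in>G. (\<Prod>x\<in>{x \<in> L. w \<in> anc x}. gchar ns (wvec ns V E i j k (gneg ns h) (gzero ns) h x) t) * complex_of_real (fedge ns (psi {par w, w}) t))
     = (\<Sum>t\<in>G. (if Dk w then gchar ns h t else 1) * (if Di w then gchar ns (gneg ns h) t else 1) * complex_of_real (fedge ns (psi {par w, w}) t))"
    unfolding prodw[OF w] Di_def Dk_def by (simp add: if_gz mult.commute)
  also have "\<dots> = (if Dk w = Di w then 1 else Fw w)"
    by (rule Lfac[OF _ f(1) f(2) f(3)]) (metis gchar_neg_mult mult.commute)
  finally show "(\<Sum>t\<in>G. (\<Prod>x\<in>{x \<in> L. w \<in> anc x}. gchar ns (wvec ns V E i j k (gneg ns h) (gzero ns) h x) t) * complex_of_real (fedge ns (psi {par w, w}) t))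
     = (if Dk w = Di w then 1 else Fw w)" .
qed

lemma q3: "qtrans ns V E r psi (wvec ns V E i j k (gzero ns) (gneg ns h) h) =
  (\<Prod>w\<in>V - {r}. if Dk w = Dj w then 1 else Fw w)"
  unfolding q_general
proof (rule prod.cong[OF refl])
  fix w assume w: "w \<in> V - {r}"
  note f = facts_w[OF w]
  have "(\<Sum>t\<in>G. (\<Prod>x\<in>{x \<in> L. w \<in> anc x}. gchar ns (wvec ns V E i j k (gzero ns) (gneg ns h) h x) t) * complex_of_real (fedge ns (psi {par w, w}) t))
     = (\<Sum>t\<in>G. (if Dk w then gchar ns h t else 1) * (if Dj w then gchar ns (gneg ns h) t else 1) * complex_of_real (fedge ns (psi {par w, w}) t))"
    unfolding prodw[OF w] Dj_def Dk_def by (simp add: if_gz mult.commute)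
  also have "\<dots> = (if Dk w = Dj w then 1 else Fw w)"
    by (rule Lfac[OF _ f(1) f(2) f(3)]) (metis gchar_neg_mult mult.commute)
  finally show "(\<Sum>t\<in>G. (\<Prod>x\<in>{x \<in> L. w \<in> anc x}. gchar ns (wvec ns V E i j k (gzero ns) (gneg ns h) h x) t) * complex_of_real (fedge ns (psi {par w, w}) t))
     = (if Dk w = Dj w then 1 else Fw w)" .
qed

definition "we = (if i = r then nu else i)"

lemma we_props: "we \<in> V - {r}" "{par we, we} = e"
  using F3 F4 nuV nur unfolding we_def by auto

lemma comb: assumes w: "w \<in> V - {r}"
  shows "(w = we \<longrightarrow> Di w \<noteq> Dj w \<and> Di w \<noteq> Dk w \<and> Dj w = Dk w) \<and>
         (w \<noteq> we \<longrightarrow> Di w = Dj w \<or> Di w = Dk w)"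
proof (cases "i = r")
  case True
  note f4 = F4[OF True]
  have wen: "we = nu" unfolding we_def using True by simp
  have "anc i = {}" using True anc_r by simp
  then have di: "\<not> Di w" by (simp add: Di_def)
  show ?thesis
  proof (cases "w = nu")
    case True then show ?thesis using di f4 wen by (simp add: Dj_def Dk_def)
  next
    case False
    have "\<not> (Dj w \<and> Dk w)" using F2 f4(2) False by (auto simp: Dj_def Dk_def)
    then show ?thesis using di False wen by auto
  qed
next
  case False
  note f3 = F3[OF False]
  have wei: "we = i" unfolding we_def using False by simp
  show ?thesis
  proof (cases "w = i")
    case True then show ?thesis using f3 wei by (simp add: Di_def Dj_def Dk_def)
  next
    case wi: False
    have "Di w \<longleftrightarrow> w \<in> anc nu" using f3(3) wi by (simp add: Di_def)
    then show ?thesis using F1 F2 wi wei by (auto simp: Dj_def Dk_def)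
  qed
qed

lemma main:
  "qtrans ns V E r psi (wvec ns V E i j k (gzero ns) (gneg ns h) h) \<noteq> 0 \<and>
   (fcheck ns (psi e) h)\<^sup>2 =
     qtrans ns V E r psi (wvec ns V E i j k h (gneg ns h) (gzero ns)) *
     qtrans ns V E r psi (wvec ns V E i j k (gneg ns h) (gzero ns) h) /
     qtrans ns V E r psi (wvec ns V E i j k (gzero ns) (gneg ns h) h)"
proof -
  let ?q3 = "qtrans ns V E r psi (wvec ns V E i j k (gzero ns) (gneg ns h) h)"
  have fin: "finite (V - {r})" using finV by simp
  have nz: "?q3 \<noteq> 0" unfolding q3 using fin facts_w(4) by (simp add: prod_zero_iff)
  have eq: "(if Di w = Dj w then 1 else Fw w) * (if Dk w = Di w then 1 else Fw w)
      = (if Dk w = Dj w then 1 else Fw w) * (if w = we then (Fw w)\<^sup>2 else 1)" if w: "w \<in> V - {r}" for w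
    using comb[OF w] by (auto simp: power2_eq_square)
  have "qtrans ns V E r psi (wvec ns V E i j k h (gneg ns h) (gzero ns)) *
        qtrans ns V E r psi (wvec ns V E i j k (gneg ns h) (gzero ns) h)
      = (\<Prod>w\<in>V - {r}. (if Dk w = Dj w then 1 else Fw w) * (if w = we then (Fw w)\<^sup>2 else 1))"
    unfolding q1 q2 prod.distrib[symmetric] using eq by (intro prod.cong) auto
  also have "\<dots> = ?q3 * (Fw we)\<^sup>2"
    unfolding prod.distrib q3 using fin we_props(1) by (simp add: prod.delta)
  finally have "(Fw we)\<^sup>2 = qtrans ns V E r psi (wvec ns V E i j k h (gneg ns h) (gzero ns)) *
        qtrans ns V E r psi (wvec ns V E i j k (gneg ns h) (gzero ns) h) / ?q3"
    using nz by (simp add: field_simps)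
  moreover have "Fw we = fcheck ns (psi e) h" using we_props(2) by (simp add: Fw_def)
  ultimately show ?thesis using nz by simp
qed

end

theorem mainTheorem5:
  fixes ns :: "nat list" and V :: "'v set" and E :: "'v set set" and r :: 'v
    and psi :: "'v set \<Rightarrow> int list \<Rightarrow> real"
    and e :: "'v set" and i nu j k :: 'v and h :: "int list"
  assumes "\<forall>n\<in>set ns. 0 < n"
    and "is_tree V E"
    and "r \<in> leaves V E"
    and "\<forall>d\<in>E. edge_param ns (psi d)"
    and "e \<in> E" and "e = {i, nu}"
    and "i \<in> leaves V E" and "nu \<in> V" and "nu \<notin> leaves V E"
    and "j \<in> leaves V E" and "k \<in> leaves V E" and "j \<noteq> i" and "k \<noteq> i"
    and "\<exists>p. is_path E p j k \<and> nu \<in> set p"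
    and "h \<in> Gset ns"
  shows "qtrans ns V E r psi (wvec ns V E i j k (gzero ns) (gneg ns h) h) \<noteq> 0 \<and>
         (fcheck ns (psi e) h)\<^sup>2 =
           qtrans ns V E r psi (wvec ns V E i j k h (gneg ns h) (gzero ns)) *
           qtrans ns V E r psi (wvec ns V E i j k (gneg ns h) (gzero ns) h) /
           qtrans ns V E r psi (wvec ns V E i j k (gzero ns) (gneg ns h) h)"
proof -
  have rV: "r \<in> V" using assms(3) by (simp add: leaves_def)
  interpret final ns V E r psi i nu j k e h
    by (unfold_locales) (use assms rV in auto)
  show ?thesis by (rule main)
qed

end
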